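(* Let $d_2>0$, $y_\star>0$, $K_P\ge 0$, $K_I>0$ and $u_0\in\mathbb{R}$. Consider the system on $\mathbb{R}^3$ with state $\chi=(\chi_1,\chi_2,\chi_3)=(x_1,x_2,x_c)$ given by $$\dot x_1 = 1 - x_2 u,\qquad \dot x_2 = -d_2 x_2 + x_1 u,\qquad \dot x_c = y_\star - x_2,\qquad u = u_0 + K_I x_c + K_P (y_\star - x_2),$$ i.e. $$\dot\chi=\begin{pmatrix}1-u_0\chi_2-K_I\chi_2\chi_3-K_P\chi_2 y_\star+K_P\chi_2^2\\ -d_2\chi_2+u_0\chi_1+K_I\chi_1\chi_3+K_P\chi_1 y_\star-K_P\chi_1\chi_2\\ -\chi_2+y_\star\end{pmatrix}.$$ Then this closed-loop system has a unique equilibrium point, and this equilibrium is unstable (in the sense of Lyapunov) for all values of $d_2>0$, $y_\star>0$, $K_P\ge 0$, $K_I>0$, $u_0\in\mathbb{R}$.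
   Context: This is the (time- and state-scaled) averaged model of a DC-DC Boost converter with no inductor resistance: $x_1$ is the scaled inductor current, $x_2$ the scaled capacitor (output) voltage, $u$ the duty cycle, $d_2>0$ the scaled load conductance, and the scaled source voltage is $1$. The controller is a PI controller acting on the voltage error $y_\star-x_2$, where $y_\star>0$ is the desired output voltage, $x_c$ is the integrator state, $K_P,K_I$ are the PI gains and $u_0$ is a designer-chosen constant. *)

theory Defs
  imports "HOL-Analysis.Analysis"
begin

definition boost_pi_field ::
  "real \<Rightarrow> real \<Rightarrow> real \<Rightarrow> real \<Rightarrow> real \<Rightarrow> real^3 \<Rightarrow> real^3" where
  "boost_pi_field d2 ystar KP KI u0 chi =
     vector [1 - u0 * chi$2 - KI * chi$2 * chi$3 - KP * chi$2 * ystar + KP * (chi$2)^2,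
             - d2 * chi$2 + u0 * chi$1 + KI * chi$1 * chi$3 + KP * chi$1 * ystar - KP * chi$1 * chi$2,
             - chi$2 + ystar]"

definition equilibrium :: "('a::real_normed_vector \<Rightarrow> 'a) \<Rightarrow> 'a \<Rightarrow> bool" where
  "equilibrium f p \<longleftrightarrow> f p = 0"

definition ode_solution_on ::
  "('a::real_normed_vector \<Rightarrow> 'a) \<Rightarrow> real \<Rightarrow> (real \<Rightarrow> 'a) \<Rightarrow> bool" where
  "ode_solution_on f T x \<longleftrightarrow>
     (\<forall>t\<in>{0..T}. (x has_vector_derivative f (x t)) (at t within {0..T}))"

definition lyapunov_stable :: "('a::real_normed_vector \<Rightarrow> 'a) \<Rightarrow> 'a \<Rightarrow> bool" where
  "lyapunov_stable f p \<longleftrightarrow>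
     (\<forall>\<epsilon>>0. \<exists>\<delta>>0. \<forall>x T. 0 \<le> T \<and> ode_solution_on f T x \<and> dist (x 0) p < \<delta> \<longrightarrow>
        (\<forall>t\<in>{0..T}. dist (x t) p < \<epsilon>))"

end

theory Submission
  imports Defs
begin


lemma local_exist:
  fixes F :: "'a::banach \<Rightarrow> 'a"
  assumes lip: "\<And>x y. norm (F x - F y) \<le> L * norm (x - y)" and L: "L > 0"
    and bnd: "\<And>x. norm (F x) \<le> B"
  shows "\<exists>x. x 0 = x0 \<and> (\<forall>t\<in>{0..1/(2*L)}. (x has_vector_derivative F (x t)) (at t within {0..1/(2*L)}))"
proof -
  define h where "h = 1/(2*L)"
  have h: "h > 0" using L by (simp add: h_def)
  have B: "B \<ge> 0" using bnd[of x0] norm_ge_zero[of "F x0"] by linarith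
  define cl where "cl t = max 0 (min h t)" for t :: real
  have cl_in: "cl t \<in> {0..h}" for t using h by (auto simp: cl_def)
  have cl_id: "t \<in> {0..h} \<Longrightarrow> cl t = t" for t by (auto simp: cl_def)
  have cl_cont: "continuous_on UNIV cl" unfolding cl_def by (intro continuous_intros)
  have Fcont: "continuous_on UNIV F"
  proof -
    have "L-lipschitz_on UNIV F"
      using L lip by (intro lipschitz_onI) (auto simp: dist_norm)
    thus ?thesis by (rule lipschitz_on_continuous_on)
  qed
  have gcont: "continuous_on S (\<lambda>s. F (apply_bcontfun \<phi> s))" for \<phi> :: "real \<Rightarrow>\<^sub>C 'a" and S
    by (rule continuous_on_compose2[OF Fcont]) auto
  have Icont: "continuous_on {0..h} (\<lambda>u. integral {0..u} (\<lambda>s. F (apply_bcontfun \<phi> s)))" for \<phi> :: "real \<Rightarrow>\<^sub>C 'a"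
    unfolding continuous_on_eq_continuous_within
    using integral_has_vector_derivative[OF gcont] has_vector_derivative_continuous by blast
  have memb: "(\<lambda>t. x0 + integral {0..cl t} (\<lambda>s. F (apply_bcontfun \<phi> s))) \<in> bcontfun" for \<phi>
  proof (rule bcontfun_normI)
    show "continuous_on UNIV (\<lambda>t. x0 + integral {0..cl t} (\<lambda>s. F (apply_bcontfun \<phi> s)))"
      by (intro continuous_intros continuous_on_compose2[OF Icont cl_cont]) (use cl_in in auto)
    fix t
    have "norm (integral {0..cl t} (\<lambda>s. F (apply_bcontfun \<phi> s))) \<le> B * (cl t - 0)"
      by (rule integral_bound) (use cl_in gcont bnd in auto)
    also have "\<dots> \<le> B * h" using cl_in[of t] B by (auto intro: mult_left_mono)
    finally show "norm (x0 + integral {0..cl t} (\<lambda>s. F (apply_bcontfun \<phi> s))) \<le> norm x0 + B * h"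
      by (meson add_left_mono norm_triangle_ineq order_trans)
  qed
  define P where "P \<phi> = Bcontfun (\<lambda>t. x0 + integral {0..cl t} (\<lambda>s. F (apply_bcontfun \<phi> s)))" for \<phi> :: "real \<Rightarrow>\<^sub>C 'a"
  have Papp: "apply_bcontfun (P \<phi>) t = x0 + integral {0..cl t} (\<lambda>s. F (apply_bcontfun \<phi> s))" for \<phi> t
    unfolding P_def using Bcontfun_inverse[OF memb] by simp
  have contr: "dist (P \<phi>) (P \<psi>) \<le> (1/2) * dist \<phi> \<psi>" for \<phi> \<psi>
  proof (rule dist_bound)
    fix t
    have int1: "(\<lambda>s. F (apply_bcontfun \<phi> s)) integrable_on {0..cl t}"
      by (rule integrable_continuous_interval[OF gcont])
    have int2: "(\<lambda>s. F (apply_bcontfun \<psi> s)) integrable_on {0..cl t}"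
      by (rule integrable_continuous_interval[OF gcont])
    have "dist (P \<phi> t) (P \<psi> t) = norm (integral {0..cl t} (\<lambda>s. F (apply_bcontfun \<phi> s) - F (apply_bcontfun \<psi> s)))"
      by (simp add: Papp dist_norm integral_diff[OF int1 int2])
    also have "\<dots> \<le> (L * dist \<phi> \<psi>) * (cl t - 0)"
    proof (rule integral_bound)
      show "0 \<le> cl t" using cl_in by auto
      show "continuous_on {0..cl t} (\<lambda>s. F (apply_bcontfun \<phi> s) - F (apply_bcontfun \<psi> s))"
        by (intro continuous_intros gcont)
      fix s
      have "norm (F (apply_bcontfun \<phi> s) - F (apply_bcontfun \<psi> s)) \<le> L * norm (apply_bcontfun \<phi> s - apply_bcontfun \<psi> s)"
        by (rule lip)
      also have "\<dots> \<le> L * dist \<phi> \<psi>"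
        using dist_bounded[of \<phi> s \<psi>] L by (simp add: dist_norm)
      finally show "norm (F (apply_bcontfun \<phi> s) - F (apply_bcontfun \<psi> s)) \<le> L * dist \<phi> \<psi>" .
    qed
    also have "\<dots> \<le> (L * dist \<phi> \<psi>) * h"
      using cl_in[of t] L by (auto intro!: mult_left_mono)
    also have "\<dots> = (1/2) * dist \<phi> \<psi>" using L by (simp add: h_def)
    finally show "dist (P \<phi> t) (P \<psi> t) \<le> (1/2) * dist \<phi> \<psi>" .
  qed
  obtain \<phi> where fixp: "P \<phi> = \<phi>"
    using banach_fix_type[of "1/2" P] contr by auto
  define x where "x = apply_bcontfun \<phi>"
  have xeq: "x t = x0 + integral {0..cl t} (\<lambda>s. F (x s))" for t
    using Papp[of \<phi> t] fixp by (simp add: x_def)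
  show ?thesis
  proof (intro exI conjI ballI)
    show "x 0 = x0" using xeq[of 0] cl_id[of 0] h by simp
    fix t assume t: "t \<in> {0..1/(2*L)}"
    hence t': "t \<in> {0..h}" by (simp add: h_def)
    have d: "((\<lambda>u. integral {0..u} (\<lambda>s. F (x s))) has_vector_derivative F (x t)) (at t within {0..h})"
      using integral_has_vector_derivative[OF gcont[where \<phi>=\<phi>] t'] by (simp add: x_def)
    have "((\<lambda>u. x0 + integral {0..u} (\<lambda>s. F (x s))) has_vector_derivative F (x t)) (at t within {0..h})"
      using has_vector_derivative_add[OF has_vector_derivative_const d] by simp
    hence "(x has_vector_derivative F (x t)) (at t within {0..h})"
    proof (rule has_vector_derivative_transform[OF t', rotated])
      fix y :: real assume "y \<in> {0..h}"
      thus "x y = x0 + integral {0..y} (\<lambda>s. F (x s))" using xeq[of y] cl_id[of y] by simp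
    qed
    thus "(x has_vector_derivative F (x t)) (at t within {0..1/(2*L)})" by (simp add: h_def)
  qed
qed

lemma glue_solution:
  fixes F :: "'a::banach \<Rightarrow> 'a"
  assumes a: "a \<ge> 0" and h: "h \<ge> 0"
    and xs: "\<forall>t\<in>{0..a}. (x has_vector_derivative F (x t)) (at t within {0..a})"
    and ys: "\<forall>t\<in>{0..h}. (y has_vector_derivative F (y t)) (at t within {0..h})"
    and y0: "y 0 = x a"
  shows "\<forall>t\<in>{0..a+h}. ((\<lambda>t. if t \<in> {0..a} then x t else y (t - a)) has_vector_derivative
            F (if t \<in> {0..a} then x t else y (t - a))) (at t within {0..a+h})"
proof
  fix t assume t: "t \<in> {0..a+h}"
  have cl: "closure {0..a} \<inter> closure {a..a+h} = {a}" using a h by auto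
  have u: "{0..a+h} = {0..a} \<union> {a..a+h}" using a h by auto
  have s1: "{0..a} \<union> (closure {0..a} \<inter> closure {a..a+h}) = {0..a}" using cl a by auto
  have s2: "{a..a+h} \<union> (closure {0..a} \<inter> closure {a..a+h}) = {a..a+h}" using cl h by auto
  have img: "(\<lambda>t. t - a) ` {a..a+h} = {0..h}"
    by (auto simp: image_iff intro!: bexI[where x="_ + a"])
  have gder: "((\<lambda>t. y (t - a)) has_vector_derivative F (y (s - a))) (at s within {a..a+h})"
    if s: "s \<in> {a..a+h}" for s
  proof -
    have d1: "((\<lambda>t. t - a) has_vector_derivative 1) (at s within {a..a+h})"
      by (auto intro!: derivative_eq_intros)
    have d2: "(y has_vector_derivative F (y (s - a))) (at ((\<lambda>t. t - a) s) within (\<lambda>t. t - a) ` {a..a+h})"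
      unfolding img using ys s by auto
    show ?thesis using vector_diff_chain_within[OF d1 d2] by (simp add: o_def)
  qed
  have "((\<lambda>t. if t \<in> {0..a} then x t else y (t - a)) has_vector_derivative
      (if t \<in> {0..a} then F (x t) else F (y (t - a)))) (at t within {0..a+h})"
  proof (rule has_vector_derivative_If_within_closures[where f'="\<lambda>t. F (x t)" and g'="\<lambda>t. F (y (t - a))"])
    show "t \<in> {0..a} \<union> {a..a+h}" using t u by auto
    show "{0..a+h} = {0..a} \<union> {a..a+h}" by (rule u)
    show "(x has_vector_derivative F (x t)) (at t within {0..a} \<union> (closure {0..a} \<inter> closure {a..a + h}))"
      if "t \<in> {0..a} \<union> (closure {0..a} \<inter> closure {a..a + h})"
      using that xs unfolding s1 by auto
    show "((\<lambda>t. y (t - a)) has_vector_derivative F (y (t - a))) (at t within {a..a+h} \<union> (closure {0..a} \<inter> closure {a..a + h}))"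
      if "t \<in> {a..a+h} \<union> (closure {0..a} \<inter> closure {a..a + h})"
      using that gder unfolding s2 by auto
    show "x t = y (t - a)" if "t \<in> closure {0..a}" "t \<in> closure {a..a+h}"
      using that cl y0 by auto
    thus "F (x t) = F (y (t - a))" if "t \<in> closure {0..a}" "t \<in> closure {a..a+h}"
      using that by auto
  qed
  thus "((\<lambda>t. if t \<in> {0..a} then x t else y (t - a)) has_vector_derivative
            F (if t \<in> {0..a} then x t else y (t - a))) (at t within {0..a+h})"
    by (simp add: if_distrib)
qed

lemma global_exist:
  fixes F :: "'a::banach \<Rightarrow> 'a"
  assumes lip: "\<And>x y. norm (F x - F y) \<le> L * norm (x - y)" and L: "L > 0"
    and bnd: "\<And>x. norm (F x) \<le> B" and T: "T \<ge> 0"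
  shows "\<exists>x. x 0 = x0 \<and> ode_solution_on F T x"
proof -
  define h where "h = 1/(2*L)"
  have h: "h > 0" using L by (simp add: h_def)
  have loc: "\<exists>x. x 0 = z \<and> (\<forall>t\<in>{0..h}. (x has_vector_derivative F (x t)) (at t within {0..h}))" for z
    using local_exist[OF lip L bnd, of z] by (simp add: h_def)
  have ind: "\<forall>z. \<exists>x. x 0 = z \<and> (\<forall>t\<in>{0..real n * h}. (x has_vector_derivative F (x t)) (at t within {0..real n * h}))" for n
  proof (induction n)
    case 0
    show ?case by (auto simp: has_vector_derivative_def has_derivative_within_singleton_iff intro!: exI bounded_linear_scaleR_left)
  next
    case (Suc n)
    show ?case
    proof
      fix z
      obtain x where x0: "x 0 = z" and xs: "\<forall>t\<in>{0..real n * h}. (x has_vector_derivative F (x t)) (at t within {0..real n * h})"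
        using Suc.IH by blast
      obtain y where y0: "y 0 = x (real n * h)" and ys: "\<forall>t\<in>{0..h}. (y has_vector_derivative F (y t)) (at t within {0..h})"
        using loc by blast
      have g: "\<forall>t\<in>{0..real n * h + h}. ((\<lambda>t. if t \<in> {0..real n * h} then x t else y (t - real n * h)) has_vector_derivative
            F (if t \<in> {0..real n * h} then x t else y (t - real n * h))) (at t within {0..real n * h + h})"
        by (rule glue_solution) (use h xs ys y0 in auto)
      have e: "real (Suc n) * h = real n * h + h" by (simp add: algebra_simps)
      show "\<exists>x. x 0 = z \<and> (\<forall>t\<in>{0..real (Suc n) * h}. (x has_vector_derivative F (x t)) (at t within {0..real (Suc n) * h}))"
      proof (intro exI[of _ "\<lambda>t. if t \<in> {0..real n * h} then x t else y (t - real n * h)"] conjI)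
        show "(if 0 \<in> {0..real n * h} then x 0 else y (0 - real n * h)) = z" using x0 h by simp
        show "\<forall>t\<in>{0..real (Suc n) * h}. ((\<lambda>t. if t \<in> {0..real n * h} then x t else y (t - real n * h)) has_vector_derivative
            F (if t \<in> {0..real n * h} then x t else y (t - real n * h))) (at t within {0..real (Suc n) * h})"
          unfolding e by (rule g)
      qed
    qed
  qed
  obtain n :: nat where n: "T / h \<le> real n" using real_arch_simple by blast
  have Tn: "T \<le> real n * h" using n h by (simp add: field_simps)
  obtain x where x0: "x 0 = x0" and xs: "\<forall>t\<in>{0..real n * h}. (x has_vector_derivative F (x t)) (at t within {0..real n * h})"
    using ind by blast
  show ?thesis
    unfolding ode_solution_on_def
  proof (intro exI[of _ x] conjI ballI)
    show "x 0 = x0" by (rule x0)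
    fix t assume t: "t \<in> {0..T}"
    hence "t \<in> {0..real n * h}" using Tn by auto
    hence "(x has_vector_derivative F (x t)) (at t within {0..real n * h})" using xs by blast
    moreover have "{0..T} \<subseteq> {0..real n * h}" using Tn by auto
    ultimately show "(x has_vector_derivative F (x t)) (at t within {0..T})"
      by (rule has_vector_derivative_within_subset)
  qed
qed



lemma prodlip:
  fixes a b a' b' M d :: real
  assumes b: "\<bar>b\<bar> \<le> M" and a': "\<bar>a'\<bar> \<le> M" and da: "\<bar>a - a'\<bar> \<le> d" and db: "\<bar>b - b'\<bar> \<le> d"
  shows "\<bar>a * b - a' * b'\<bar> \<le> 2 * M * d"
proof -
  have e: "a * b - a' * b' = (a - a') * b + a' * (b - b')" by (simp add: algebra_simps)
  have M0: "M \<ge> 0" using order_trans[OF abs_ge_zero b] .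
  have d0: "d \<ge> 0" using order_trans[OF abs_ge_zero da] .
  have 1: "\<bar>(a - a') * b\<bar> \<le> d * M" unfolding abs_mult by (rule mult_mono[OF da b d0 abs_ge_zero])
  have 2: "\<bar>a' * (b - b')\<bar> \<le> M * d" unfolding abs_mult by (rule mult_mono[OF a' db M0 abs_ge_zero])
  have "\<bar>a * b - a' * b'\<bar> \<le> \<bar>(a - a') * b\<bar> + \<bar>a' * (b - b')\<bar>" unfolding e by (rule abs_triangle_ineq)
  also have "\<dots> \<le> d * M + M * d" by (rule add_mono[OF 1 2])
  also have "\<dots> = 2 * M * d" by simp
  finally show ?thesis .
qed

lemma tri4: "\<bar>- x - y - z + w\<bar> \<le> \<bar>x\<bar> + \<bar>y\<bar> + \<bar>z\<bar> + \<bar>w::real\<bar>"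
proof -
  have "\<bar>- x - y - z + w\<bar> \<le> \<bar>- x - y - z\<bar> + \<bar>w\<bar>" by (rule abs_triangle_ineq)
  also have "\<bar>- x - y - z\<bar> \<le> \<bar>- x - y\<bar> + \<bar>z\<bar>" by (rule abs_triangle_ineq4)
  also have "\<bar>- x - y\<bar> \<le> \<bar>- x\<bar> + \<bar>y\<bar>" by (rule abs_triangle_ineq4)
  finally show ?thesis by simp
qed

lemma tri5: "\<bar>- x + y + z + w - v\<bar> \<le> \<bar>x\<bar> + \<bar>y\<bar> + \<bar>z\<bar> + \<bar>w\<bar> + \<bar>v::real\<bar>"
proof -
  have "\<bar>- x + y + z + w - v\<bar> \<le> \<bar>- x + y + z + w\<bar> + \<bar>v\<bar>" by (rule abs_triangle_ineq4)
  also have "\<bar>- x + y + z + w\<bar> \<le> \<bar>- x + y + z\<bar> + \<bar>w\<bar>" by (rule abs_triangle_ineq)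
  also have "\<bar>- x + y + z\<bar> \<le> \<bar>- x + y\<bar> + \<bar>z\<bar>" by (rule abs_triangle_ineq)
  also have "\<bar>- x + y\<bar> \<le> \<bar>- x\<bar> + \<bar>y\<bar>" by (rule abs_triangle_ineq)
  finally show ?thesis by simp
qed

lemma field_comp:
  "boost_pi_field d2 ystar KP KI u0 chi $ 1 = 1 - u0 * chi$2 - KI * chi$2 * chi$3 - KP * chi$2 * ystar + KP * (chi$2)^2"
  "boost_pi_field d2 ystar KP KI u0 chi $ 2 = - d2 * chi$2 + u0 * chi$1 + KI * chi$1 * chi$3 + KP * chi$1 * ystar - KP * chi$1 * chi$2"
  "boost_pi_field d2 ystar KP KI u0 chi $ 3 = - chi$2 + ystar"
  unfolding boost_pi_field_def by (simp_all only: vector_3)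

lemma norm3: "norm (x :: real^3) \<le> \<bar>x$1\<bar> + \<bar>x$2\<bar> + \<bar>x$3\<bar>"
  using norm_le_l1_cart[of x] by (simp add: sum_3)

lemma field_lip:
  fixes a b :: "real^3"
  assumes KI: "KI \<ge> 0" and KP: "KP \<ge> 0" and ys: "ystar \<ge> 0"
    and M: "\<And>i. \<bar>a$i\<bar> \<le> M" "\<And>i. \<bar>b$i\<bar> \<le> M" and d: "\<And>i. \<bar>a$i - b$i\<bar> \<le> d"
  shows "norm (boost_pi_field d2 ystar KP KI u0 a - boost_pi_field d2 ystar KP KI u0 b)
          \<le> (\<bar>u0\<bar> + 2*KI*M + KP*ystar + 2*KP*M + \<bar>d2\<bar> + \<bar>u0\<bar> + 2*KI*M + KP*ystar + 2*KP*M + 1) * d"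
proof -
  let ?f = "boost_pi_field d2 ystar KP KI u0"
  have d0: "d \<ge> 0" using order_trans[OF abs_ge_zero d[of 1]] .
  have p23: "\<bar>a$2 * a$3 - b$2 * b$3\<bar> \<le> 2*M*d" by (rule prodlip[OF M(1) M(2) d d])
  have p22: "\<bar>a$2 * a$2 - b$2 * b$2\<bar> \<le> 2*M*d" by (rule prodlip[OF M(1) M(2) d d])
  have p13: "\<bar>a$1 * a$3 - b$1 * b$3\<bar> \<le> 2*M*d" by (rule prodlip[OF M(1) M(2) d d])
  have p12: "\<bar>a$1 * a$2 - b$1 * b$2\<bar> \<le> 2*M*d" by (rule prodlip[OF M(1) M(2) d d])
  have e1: "?f a $ 1 - ?f b $ 1 = - (u0 * (a$2 - b$2)) - KI * (a$2 * a$3 - b$2 * b$3) - KP * ystar * (a$2 - b$2) + KP * (a$2 * a$2 - b$2 * b$2)"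
    by (simp add: field_comp power2_eq_square algebra_simps)
  have e2: "?f a $ 2 - ?f b $ 2 = - (d2 * (a$2 - b$2)) + u0 * (a$1 - b$1) + KI * (a$1 * a$3 - b$1 * b$3) + KP * ystar * (a$1 - b$1) - KP * (a$1 * a$2 - b$1 * b$2)"
    by (simp add: field_comp algebra_simps)
  have e3: "?f a $ 3 - ?f b $ 3 = - (a$2 - b$2)"
    by (simp add: field_comp algebra_simps)
  have t1: "\<bar>u0 * (a$2 - b$2)\<bar> \<le> \<bar>u0\<bar> * d" unfolding abs_mult by (rule mult_left_mono[OF d abs_ge_zero])
  have t2: "\<bar>KI * (a$2 * a$3 - b$2 * b$3)\<bar> \<le> KI * (2*M*d)" unfolding abs_mult abs_of_nonneg[OF KI] by (rule mult_left_mono[OF p23 KI])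
  have t3: "\<bar>KP * ystar * (a$2 - b$2)\<bar> \<le> KP * ystar * d" unfolding abs_mult abs_of_nonneg[OF KP] abs_of_nonneg[OF ys] by (rule mult_left_mono[OF d mult_nonneg_nonneg[OF KP ys]])
  have t4: "\<bar>KP * (a$2 * a$2 - b$2 * b$2)\<bar> \<le> KP * (2*M*d)" unfolding abs_mult abs_of_nonneg[OF KP] by (rule mult_left_mono[OF p22 KP])
  have s1: "\<bar>?f a $ 1 - ?f b $ 1\<bar> \<le> \<bar>u0\<bar> * d + KI * (2*M*d) + KP * ystar * d + KP * (2*M*d)"
    unfolding e1 by (rule order_trans[OF tri4[of "u0 * (a$2 - b$2)" "KI * (a$2 * a$3 - b$2 * b$3)" "KP * ystar * (a$2 - b$2)" "KP * (a$2 * a$2 - b$2 * b$2)"] add_mono[OF add_mono[OF add_mono[OF t1 t2] t3] t4]])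
  have u1: "\<bar>d2 * (a$2 - b$2)\<bar> \<le> \<bar>d2\<bar> * d" unfolding abs_mult by (rule mult_left_mono[OF d abs_ge_zero])
  have u2: "\<bar>u0 * (a$1 - b$1)\<bar> \<le> \<bar>u0\<bar> * d" unfolding abs_mult by (rule mult_left_mono[OF d abs_ge_zero])
  have u3: "\<bar>KI * (a$1 * a$3 - b$1 * b$3)\<bar> \<le> KI * (2*M*d)" unfolding abs_mult abs_of_nonneg[OF KI] by (rule mult_left_mono[OF p13 KI])
  have u4: "\<bar>KP * ystar * (a$1 - b$1)\<bar> \<le> KP * ystar * d" unfolding abs_mult abs_of_nonneg[OF KP] abs_of_nonneg[OF ys] by (rule mult_left_mono[OF d mult_nonneg_nonneg[OF KP ys]])
  have u5: "\<bar>KP * (a$1 * a$2 - b$1 * b$2)\<bar> \<le> KP * (2*M*d)" unfolding abs_mult abs_of_nonneg[OF KP] by (rule mult_left_mono[OF p12 KP])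
  have s2: "\<bar>?f a $ 2 - ?f b $ 2\<bar> \<le> \<bar>d2\<bar> * d + \<bar>u0\<bar> * d + KI * (2*M*d) + KP * ystar * d + KP * (2*M*d)"
    unfolding e2 by (rule order_trans[OF tri5[of "d2 * (a$2 - b$2)" "u0 * (a$1 - b$1)" "KI * (a$1 * a$3 - b$1 * b$3)" "KP * ystar * (a$1 - b$1)" "KP * (a$1 * a$2 - b$1 * b$2)"] add_mono[OF add_mono[OF add_mono[OF add_mono[OF u1 u2] u3] u4] u5]])
  have s3: "\<bar>?f a $ 3 - ?f b $ 3\<bar> \<le> d" unfolding e3 abs_minus_cancel by (rule d)
  have "norm (?f a - ?f b) \<le> \<bar>?f a $ 1 - ?f b $ 1\<bar> + \<bar>?f a $ 2 - ?f b $ 2\<bar> + \<bar>?f a $ 3 - ?f b $ 3\<bar>"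
    using norm3[of "?f a - ?f b"] by simp
  also have "\<dots> \<le> (\<bar>u0\<bar> * d + KI * (2*M*d) + KP * ystar * d + KP * (2*M*d)) + (\<bar>d2\<bar> * d + \<bar>u0\<bar> * d + KI * (2*M*d) + KP * ystar * d + KP * (2*M*d)) + d"
    using s1 s2 s3 by (intro add_mono)
  also have "\<dots> = (\<bar>u0\<bar> + 2*KI*M + KP*ystar + 2*KP*M + \<bar>d2\<bar> + \<bar>u0\<bar> + 2*KI*M + KP*ystar + 2*KP*M + 1) * d"
    by algebra
  finally show ?thesis .
qed

definition clampb :: "real^3 \<Rightarrow> real \<Rightarrow> real^3 \<Rightarrow> real^3" where
  "clampb p r x = (\<chi> i. max (p$i - r) (min (p$i + r) (x$i)))"

lemma cl1_id: "\<bar>t - c\<bar> \<le> (r::real) \<Longrightarrow> max (c - r) (min (c + r) t) = t"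
  by (auto simp: max_def min_def abs_le_iff)
lemma cl1_bound: "\<bar>c\<bar> \<le> m \<Longrightarrow> 0 \<le> (r::real) \<Longrightarrow> \<bar>max (c - r) (min (c + r) t)\<bar> \<le> m + r"
  by (auto simp: max_def min_def abs_le_iff)
lemma cl1_lip: "\<bar>max (c - r) (min (c + r) t) - max (c - r) (min (c + r) s)\<bar> \<le> \<bar>t - (s::real)\<bar>"
  by (auto simp: max_def min_def abs_le_iff)
lemma cl1_near: "0 \<le> (r::real) \<Longrightarrow> \<bar>max (c - r) (min (c + r) t) - c\<bar> \<le> r"
  by (auto simp: max_def min_def abs_le_iff)

lemma clampb_comp: "clampb p r x $ i = max (p$i - r) (min (p$i + r) (x$i))"
  by (simp add: clampb_def)

lemma clampb_id: assumes "dist x p \<le> r" shows "clampb p r x = x"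
proof -
  have "\<bar>x$i - p$i\<bar> \<le> r" for i
    using component_le_norm_cart[of "x - p" i] assms by (simp add: dist_norm)
  thus ?thesis unfolding clampb_def by (intro vec_eq_iff[THEN iffD2] allI) (simp add: cl1_id)
qed

lemma clampb_bound: assumes "r \<ge> 0" shows "\<bar>clampb p r x $ i\<bar> \<le> norm p + r"
  unfolding clampb_comp by (rule cl1_bound[OF component_le_norm_cart assms])

lemma clampb_lip: "\<bar>clampb p r x $ i - clampb p r y $ i\<bar> \<le> norm (x - y)"
proof -
  have "\<bar>clampb p r x $ i - clampb p r y $ i\<bar> \<le> \<bar>x$i - y$i\<bar>"
    unfolding clampb_comp by (rule cl1_lip)
  also have "\<dots> \<le> norm (x - y)" using component_le_norm_cart[of "x - y" i] by simp
  finally show ?thesis .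
qed

lemma clampb_near: assumes "r \<ge> 0" shows "\<bar>clampb p r x $ i - p $ i\<bar> \<le> r"
  unfolding clampb_comp by (rule cl1_near[OF assms])

lemma mod_field:
  assumes KI: "KI \<ge> 0" and KP: "KP \<ge> 0" and ys: "ystar \<ge> 0" and r: "r > 0"
  shows "\<exists>L B. L > 0 \<and> (\<forall>x y. norm (boost_pi_field d2 ystar KP KI u0 (clampb p r x) - boost_pi_field d2 ystar KP KI u0 (clampb p r y)) \<le> L * norm (x - y))
     \<and> (\<forall>x. norm (boost_pi_field d2 ystar KP KI u0 (clampb p r x)) \<le> B)"
proof -
  let ?f = "boost_pi_field d2 ystar KP KI u0"
  define M where "M = norm p + r"
  define L where "L = \<bar>u0\<bar> + 2*KI*M + KP*ystar + 2*KP*M + \<bar>d2\<bar> + \<bar>u0\<bar> + 2*KI*M + KP*ystar + 2*KP*M + 1"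
  have M0: "M \<ge> 0" using r by (simp add: M_def)
  have "KP*M \<ge> 0" "KP*ystar \<ge> 0" "KI*M \<ge> 0" using M0 KI KP ys by simp_all
  hence L: "L > 0" unfolding L_def using abs_ge_zero[of u0] abs_ge_zero[of d2] by linarith
  have lip: "norm (?f (clampb p r x) - ?f (clampb p r y)) \<le> L * norm (x - y)" for x y
    unfolding L_def
    by (rule field_lip[OF KI KP ys]) (use clampb_bound[of r p] r clampb_lip M_def in auto)
  have pp: "clampb p r p = p" by (rule clampb_id) (use r in simp)
  have bnd: "norm (?f (clampb p r x)) \<le> L * r + norm (?f p)" for x
  proof -
    have "norm (?f (clampb p r x) - ?f p) \<le> L * r"
      unfolding L_def
    proof (rule field_lip[OF KI KP ys])
      show "\<bar>clampb p r x $ i\<bar> \<le> M" for i using clampb_bound[of r p x i] r by (simp add: M_def)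
      show "\<bar>p $ i\<bar> \<le> M" for i using component_le_norm_cart[of p i] r by (simp add: M_def)
      show "\<bar>clampb p r x $ i - p $ i\<bar> \<le> r" for i using clampb_near[of r p x i] r by simp
    qed
    thus ?thesis using norm_triangle_ineq2[of "?f (clampb p r x)" "?f p"] by linarith
  qed
  show ?thesis using L lip bnd by blast
qed



definition lf :: "real \<Rightarrow> real \<Rightarrow> real \<Rightarrow> real \<Rightarrow> real \<Rightarrow> real \<Rightarrow> real" where
  "lf \<alpha> \<beta> \<gamma> y1 y2 z = \<alpha> * y1 + \<beta> * y2 + \<gamma> * z"

lemma model_identity:
  fixes ys c d2 KP KI lam pp K E G A y1 y2 z :: real
  assumes hc: "c * ys = 1" and R1: "lam * pp = KI" and R2: "pp = lam^2 + E*lam + G - KP + c^2"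
    and EA: "A = ys * KP - c"
  defines "v \<equiv> lf 0 (-KP) KI y1 y2 z"
  defines "f1 \<equiv> A * y2 - ys * KI * z - y2 * v"
  defines "f2 \<equiv> c * y1 - E * y2 + G * z + y1 * v"
  defines "f3 \<equiv> - y2"
  defines "a \<equiv> lf 1 (lam*ys) (ys*(G - pp)) y1 y2 z"
  defines "zeta \<equiv> lf 0 (-1) (-lam) y1 y2 z"
  defines "eta \<equiv> lf (-c) (E + lam) (-G) y1 y2 z"
  shows "lf 1 (lam*ys) (ys*(G - pp)) f1 f2 f3 - K * (2 * eta * lf (-c) (E + lam) (-G) f1 f2 f3 + 2 * pp * zeta * lf 0 (-1) (-lam) f1 f2 f3)
    = lam * a + v * lf (lam*ys) (-1) 0 y1 y2 z + 2 * K * (E + lam) * eta^2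
      - 2 * K * (v * (eta * lf (E + lam) c 0 y1 y2 z - pp * zeta * y1))"
  using hc R1 R2 EA unfolding v_def f1_def f2_def f3_def a_def zeta_def eta_def lf_def
  by algebra

lemma core_ineq:
  fixes lam K pm pp C1 C3 P ga N rho a eta zeta DPhi :: real
  assumes lam: "lam > 0" and K: "K > 0" and pm: "pm > 0" "pm \<le> pp" "pm \<le> 1"
    and C1: "C1 \<ge> 0" and C3: "C3 \<ge> 0" and P: "P \<ge> 0" and ga: "ga \<ge> 0"
    and N: "0 \<le> N" "N \<le> rho" and rho1: "rho \<le> 1"
    and NP: "N^2 \<le> P * (a^2 + eta^2 + zeta^2)"
    and aN: "\<bar>a\<bar> \<le> ga * N"
    and pos: "a - K * (eta^2 + pp * zeta^2) > 0"
    and D: "DPhi \<ge> lam * a - (C1 + K * C3 * N) * N^2"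
    and hK: "C1 * P \<le> (lam/4) * (K * pm)"
    and hr: "rho * (C1 * P * ga + K * C3 * P * ga + C3 * P / pm) \<le> lam/4"
  shows "DPhi \<ge> (lam/2) * a"
proof -
  have q0: "eta^2 + pp * zeta^2 \<ge> 0" using pm by (simp add: add_nonneg_nonneg)
  have a0: "a > 0" using pos K q0 by (smt (verit) mult_nonneg_nonneg)
  have "pm * (eta^2 + zeta^2) \<le> eta^2 + pp * zeta^2"
  proof -
    have "pm * eta^2 \<le> 1 * eta^2" by (rule mult_right_mono) (use pm in auto)
    moreover have "pm * zeta^2 \<le> pp * zeta^2" by (rule mult_right_mono) (use pm in auto)
    ultimately show ?thesis by (simp add: distrib_left)
  qed
  also have "\<dots> < a / K" using pos K by (simp add: field_simps)
  finally have ez: "eta^2 + zeta^2 < a / (K * pm)" using pm K by (simp add: field_simps)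
  have aa: "a^2 \<le> a * (ga * rho)"
  proof -
    have "a \<le> ga * rho" using aN a0 N ga by (smt (verit) mult_left_mono)
    thus ?thesis using a0 by (simp add: power2_eq_square mult_left_mono)
  qed
  have N2: "N^2 \<le> a * (P * (ga * rho + 1 / (K * pm)))"
  proof -
    have "a^2 + eta^2 + zeta^2 \<le> a * (ga * rho) + a / (K * pm)" using aa ez by linarith
    hence "P * (a^2 + eta^2 + zeta^2) \<le> P * (a * (ga * rho) + a / (K * pm))" by (rule mult_left_mono) (rule P)
    also have "\<dots> = a * (P * (ga * rho + 1 / (K * pm)))" by (simp add: algebra_simps)
    finally show ?thesis using NP by linarith
  qed
  have cK: "C1 + K * C3 * N \<ge> 0" using C1 C3 K N by simp
  have E1: "(C1 + K * C3 * N) * N^2 \<le> (C1 + K * C3 * N) * (a * (P * (ga * rho + 1 / (K * pm))))"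
    by (rule mult_left_mono[OF N2 cK])
  have E2: "(C1 + K * C3 * N) * (a * (P * (ga * rho + 1 / (K * pm))))
      = a * (C1 * P / (K * pm) + (C1 * P * ga * rho + K * C3 * N * P * ga * rho + C3 * N * P / pm))"
    using K pm by (simp add: field_simps)
  have E3: "K * C3 * N * P * ga * rho \<le> K * C3 * P * ga * rho"
  proof -
    have "N * rho \<le> 1 * rho" by (rule mult_right_mono) (use N rho1 in auto)
    hence "(K * C3 * P * ga) * (N * rho) \<le> (K * C3 * P * ga) * (1 * rho)"
      by (rule mult_left_mono) (use K C3 P ga in simp)
    thus ?thesis by (simp add: algebra_simps)
  qed
  have E4: "C3 * N * P / pm \<le> C3 * rho * P / pm"
  proof -
    have "C3 * N * P \<le> C3 * rho * P" using C3 P N by (simp add: mult_left_mono mult_right_mono)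
    thus ?thesis using pm by (simp add: divide_right_mono)
  qed
  have E5: "C1 * P / (K * pm) \<le> lam / 4" using hK K pm by (simp add: field_simps)
  have E6: "C1 * P * ga * rho + K * C3 * P * ga * rho + C3 * rho * P / pm \<le> lam/4"
    using hr by (simp add: algebra_simps)
  have "C1 * P / (K * pm) + (C1 * P * ga * rho + K * C3 * N * P * ga * rho + C3 * N * P / pm) \<le> lam / 2"
    using E3 E4 E5 E6 by linarith
  hence "a * (C1 * P / (K * pm) + (C1 * P * ga * rho + K * C3 * N * P * ga * rho + C3 * N * P / pm)) \<le> a * (lam/2)"
    using a0 by (simp add: mult_left_mono)
  hence R: "(C1 + K * C3 * N) * N^2 \<le> a * (lam/2)" using E1 E2 by linarith
  have "lam * a - a * (lam/2) = (lam/2) * a" by (simp add: algebra_simps)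
  thus ?thesis using D R by linarith
qed


lemma lf_bound: "\<bar>lf \<alpha> \<beta> \<gamma> y1 y2 z\<bar> \<le> (\<bar>\<alpha>\<bar> + \<bar>\<beta>\<bar> + \<bar>\<gamma>\<bar>) * (\<bar>y1\<bar> + \<bar>y2\<bar> + \<bar>z\<bar>)"
proof -
  let ?N = "\<bar>y1\<bar> + \<bar>y2\<bar> + \<bar>z\<bar>"
  have 1: "\<bar>\<alpha> * y1\<bar> \<le> \<bar>\<alpha>\<bar> * ?N" unfolding abs_mult by (rule mult_left_mono) auto
  have 2: "\<bar>\<beta> * y2\<bar> \<le> \<bar>\<beta>\<bar> * ?N" unfolding abs_mult by (rule mult_left_mono) auto
  have 3: "\<bar>\<gamma> * z\<bar> \<le> \<bar>\<gamma>\<bar> * ?N" unfolding abs_mult by (rule mult_left_mono) auto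
  have "\<bar>lf \<alpha> \<beta> \<gamma> y1 y2 z\<bar> \<le> \<bar>\<alpha> * y1\<bar> + \<bar>\<beta> * y2\<bar> + \<bar>\<gamma> * z\<bar>"
    unfolding lf_def by (meson abs_triangle_ineq add_mono order_trans order_refl)
  also have "\<dots> \<le> \<bar>\<alpha>\<bar> * ?N + \<bar>\<beta>\<bar> * ?N + \<bar>\<gamma>\<bar> * ?N" by (intro add_mono 1 2 3)
  also have "\<dots> = (\<bar>\<alpha>\<bar> + \<bar>\<beta>\<bar> + \<bar>\<gamma>\<bar>) * ?N" by (simp add: algebra_simps)
  finally show ?thesis .
qed

lemma prod_bound: "\<bar>X\<bar> \<le> A \<Longrightarrow> \<bar>Y\<bar> \<le> B \<Longrightarrow> \<bar>X * Y\<bar> \<le> A * (B::real)"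
  unfolding abs_mult by (rule mult_mono) (auto intro: order_trans[OF abs_ge_zero])

lemma sq3: "(x + y + z)^2 \<le> 3 * (x^2 + y^2 + (z::real)^2)"
proof -
  have "0 \<le> (x - y)^2 + (y - z)^2 + (x - z)^2" by simp
  thus ?thesis by (simp add: power2_eq_square algebra_simps)
qed


lemma inv_bound:
  fixes ys c E G lam pp :: real
  assumes c: "c \<ge> 0" and hc: "c * ys = 1" and ys: "ys > 0" and E: "E \<ge> 0" and G: "G \<ge> 0"
    and lam: "lam > 0" and pp: "pp > 0"
  shows "\<exists>M\<ge>0. \<forall>y1 y2 z. \<bar>y1\<bar> + \<bar>y2\<bar> + \<bar>z\<bar> \<le> M * (\<bar>lf 1 (lam*ys) (ys*(G - pp)) y1 y2 z\<bar>
            + \<bar>lf (-c) (E + lam) (-G) y1 y2 z\<bar> + \<bar>lf 0 (-1) (-lam) y1 y2 z\<bar>)"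
proof -
  define D where "D = (E + 2*lam) * lam + pp"
  have D: "D > 0" unfolding D_def using E lam pp by (simp add: add_pos_pos)
  define mz where "mz = (c + 1 + (E + 2*lam)) / D"
  define m2 where "m2 = 1 + lam * mz"
  define m1 where "m1 = ys * (1 + (E + lam) * m2 + G * mz)"
  have mz0: "mz \<ge> 0" unfolding mz_def using D c E lam by simp
  have m20: "m2 \<ge> 0" unfolding m2_def using mz0 lam by simp
  have m10: "m1 \<ge> 0" unfolding m1_def using m20 mz0 ys E G lam by simp
  show ?thesis
  proof (intro exI[of _ "mz + m2 + m1"] conjI allI)
    show "mz + m2 + m1 \<ge> 0" using mz0 m20 m10 by simp
    fix y1 y2 z
    define a where "a = lf 1 (lam*ys) (ys*(G - pp)) y1 y2 z"
    define eta where "eta = lf (-c) (E + lam) (-G) y1 y2 z"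
    define zeta where "zeta = lf 0 (-1) (-lam) y1 y2 z"
    define S where "S = \<bar>a\<bar> + \<bar>eta\<bar> + \<bar>zeta\<bar>"
    have S0: "S \<ge> 0" unfolding S_def by simp
    have iz: "D * z = - lf c 1 (E + 2*lam) a eta zeta"
      unfolding D_def a_def eta_def zeta_def lf_def using hc by algebra
    have i2: "y2 = - zeta - lam * z" unfolding zeta_def lf_def by simp
    have i1: "y1 = ys * (- eta + (E + lam) * y2 - G * z)"
      unfolding eta_def lf_def using hc by algebra
    have "D * \<bar>z\<bar> \<le> (c + 1 + (E + 2*lam)) * S"
    proof -
      have "D * \<bar>z\<bar> = \<bar>D * z\<bar>" using D by (simp add: abs_mult)
      also have "\<dots> = \<bar>lf c 1 (E + 2*lam) a eta zeta\<bar>" unfolding iz by (rule abs_minus_cancel)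
      also have "\<dots> \<le> (\<bar>c\<bar> + \<bar>1\<bar> + \<bar>E + 2*lam\<bar>) * S" unfolding S_def by (rule lf_bound)
      also have "\<dots> = (c + 1 + (E + 2*lam)) * S" using c E lam by simp
      finally show ?thesis .
    qed
    hence z: "\<bar>z\<bar> \<le> mz * S" unfolding mz_def using D by (simp add: field_simps)
    have y2: "\<bar>y2\<bar> \<le> m2 * S"
    proof -
      have "\<bar>y2\<bar> \<le> \<bar>- zeta\<bar> + \<bar>lam * z\<bar>" unfolding i2 by (rule abs_triangle_ineq4)
      also have "\<dots> = \<bar>zeta\<bar> + lam * \<bar>z\<bar>" using lam by (simp add: abs_mult)
      also have "\<dots> \<le> S + lam * (mz * S)" using z lam unfolding S_def
        by (intro add_mono mult_left_mono) auto
      also have "\<dots> = m2 * S" unfolding m2_def by (simp add: algebra_simps)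
      finally show ?thesis .
    qed
    have y1: "\<bar>y1\<bar> \<le> m1 * S"
    proof -
      have "\<bar>- eta + (E + lam) * y2 - G * z\<bar> \<le> \<bar>- eta\<bar> + \<bar>(E + lam) * y2\<bar> + \<bar>G * z\<bar>"
        by (rule order_trans[OF abs_triangle_ineq4 add_right_mono[OF abs_triangle_ineq]])
      also have "\<bar>- eta\<bar> + \<bar>(E + lam) * y2\<bar> + \<bar>G * z\<bar> = \<bar>eta\<bar> + (E + lam) * \<bar>y2\<bar> + G * \<bar>z\<bar>"
        using E lam G by (simp add: abs_mult)
      also have "\<dots> \<le> S + (E + lam) * (m2 * S) + G * (mz * S)"
        using E lam G y2 z unfolding S_def by (intro add_mono mult_left_mono) auto
      finally have "\<bar>- eta + (E + lam) * y2 - G * z\<bar> \<le> S + (E + lam) * (m2 * S) + G * (mz * S)" .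
      hence "ys * \<bar>- eta + (E + lam) * y2 - G * z\<bar> \<le> ys * (S + (E + lam) * (m2 * S) + G * (mz * S))"
        using ys by (simp add: mult_left_mono)
      also have "\<dots> = m1 * S" unfolding m1_def by (simp add: algebra_simps)
      finally show ?thesis using ys by (subst i1) (simp add: abs_mult)
    qed
    show "\<bar>y1\<bar> + \<bar>y2\<bar> + \<bar>z\<bar> \<le> (mz + m2 + m1) * (\<bar>lf 1 (lam*ys) (ys*(G - pp)) y1 y2 z\<bar>
            + \<bar>lf (-c) (E + lam) (-G) y1 y2 z\<bar> + \<bar>lf 0 (-1) (-lam) y1 y2 z\<bar>)"
      using y1 y2 z unfolding S_def a_def eta_def zeta_def by (simp add: algebra_simps)
  qed
qed


definition Phi :: "real \<Rightarrow> real \<Rightarrow> real \<Rightarrow> real \<Rightarrow> real \<Rightarrow> real \<Rightarrow> real \<Rightarrow> real \<Rightarrow> real \<Rightarrow> real \<Rightarrow> real" where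
  "Phi c E G lam pp ys K y1 y2 z = lf 1 (lam*ys) (ys*(G - pp)) y1 y2 z
     - K * ((lf (-c) (E + lam) (-G) y1 y2 z)^2 + pp * (lf 0 (-1) (-lam) y1 y2 z)^2)"

definition DPhi :: "real \<Rightarrow> real \<Rightarrow> real \<Rightarrow> real \<Rightarrow> real \<Rightarrow> real \<Rightarrow> real \<Rightarrow> real \<Rightarrow> real \<Rightarrow> real \<Rightarrow> real \<Rightarrow> real \<Rightarrow> real \<Rightarrow> real" where
  "DPhi c E G lam pp ys K y1 y2 z f1 f2 f3 = lf 1 (lam*ys) (ys*(G - pp)) f1 f2 f3
     - K * (2 * lf (-c) (E + lam) (-G) y1 y2 z * lf (-c) (E + lam) (-G) f1 f2 f3
            + 2 * pp * lf 0 (-1) (-lam) y1 y2 z * lf 0 (-1) (-lam) f1 f2 f3)"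

definition vel1 :: "real \<Rightarrow> real \<Rightarrow> real \<Rightarrow> real \<Rightarrow> real \<Rightarrow> real \<Rightarrow> real \<Rightarrow> real" where
  "vel1 c ys KP KI y1 y2 z = (ys * KP - c) * y2 - ys * KI * z - y2 * lf 0 (-KP) KI y1 y2 z"
definition vel2 :: "real \<Rightarrow> real \<Rightarrow> real \<Rightarrow> real \<Rightarrow> real \<Rightarrow> real \<Rightarrow> real \<Rightarrow> real \<Rightarrow> real" where
  "vel2 c E G KP KI y1 y2 z = c * y1 - E * y2 + G * z + y1 * lf 0 (-KP) KI y1 y2 z"

lemma model_ineq:
  fixes ys c E G KP KI lam pp :: real
  assumes ys: "ys > 0" and c: "c > 0" and hc: "c * ys = 1" and E: "E \<ge> 0" and G: "G \<ge> 0"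
    and KP: "KP \<ge> 0" and KI: "KI > 0" and lam: "lam > 0"
    and R1: "lam * pp = KI" and R2: "pp = lam^2 + E*lam + G - KP + c^2"
  shows "\<exists>K>0. \<exists>rho>0. \<exists>ga.
     (\<forall>y1 y2 z. \<bar>y1\<bar> + \<bar>y2\<bar> + \<bar>z\<bar> \<le> rho \<longrightarrow> Phi c E G lam pp ys K y1 y2 z > 0 \<longrightarrow>
        DPhi c E G lam pp ys K y1 y2 z (vel1 c ys KP KI y1 y2 z) (vel2 c E G KP KI y1 y2 z) (- y2)
          \<ge> (lam/2) * Phi c E G lam pp ys K y1 y2 z)
   \<and> (\<forall>K' y1 y2 z. K' \<ge> 0 \<longrightarrow> Phi c E G lam pp ys K' y1 y2 z \<le> ga * (\<bar>y1\<bar> + \<bar>y2\<bar> + \<bar>z\<bar>))"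
proof -
  have pp: "pp > 0" using R1 lam KI by (metis mult_pos_pos zero_less_mult_pos)
  obtain M where M0: "M \<ge> 0" and MB: "\<And>y1 y2 z. \<bar>y1\<bar> + \<bar>y2\<bar> + \<bar>z\<bar> \<le> M * (\<bar>lf 1 (lam*ys) (ys*(G - pp)) y1 y2 z\<bar>
            + \<bar>lf (-c) (E + lam) (-G) y1 y2 z\<bar> + \<bar>lf 0 (-1) (-lam) y1 y2 z\<bar>)"
    using inv_bound[OF _ hc ys E G lam pp] c by auto
  define kv where "kv = KI + KP"
  define C1 where "C1 = kv * (lam * ys + 1)"
  define keta where "keta = c + (E + lam) + G"
  define kw where "kw = (E + lam) + c"
  define kz where "kz = 1 + lam"
  define C3 where "C3 = kv * (keta * kw + pp * kz)"
  define ga where "ga = 1 + lam * ys + \<bar>ys * (G - pp)\<bar>"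
  define P where "P = 3 * M^2"
  define pm where "pm = min 1 pp"
  define K where "K = 4 * C1 * P / (lam * pm) + 1"
  define W where "W = C1 * P * ga + K * (2 * C3) * P * ga + (2 * C3) * P / pm"
  define rho where "rho = min 1 (lam / (4 * (W + 1)))"
  have kv0: "kv \<ge> 0" unfolding kv_def using KI KP by simp
  have C10: "C1 \<ge> 0" unfolding C1_def using kv0 lam ys by simp
  have C30: "C3 \<ge> 0" unfolding C3_def keta_def kw_def kz_def using kv0 lam c E G pp by simp
  have ga0: "ga \<ge> 0" unfolding ga_def using lam ys by simp
  have P0: "P \<ge> 0" unfolding P_def by simp
  have pm: "pm > 0" "pm \<le> pp" "pm \<le> 1" unfolding pm_def using pp by auto
  have "4 * C1 * P / (lam * pm) \<ge> 0" using C10 P0 lam pm by (intro divide_nonneg_pos) simp_all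
  hence K0: "K > 0" unfolding K_def by linarith
  have W0: "W \<ge> 0" unfolding W_def using C10 C30 P0 ga0 K0 pm by simp
  have rho0: "rho > 0" unfolding rho_def using lam W0 by simp
  have rho1: "rho \<le> 1" unfolding rho_def by simp
  have hK: "C1 * P \<le> (lam/4) * (K * pm)"
  proof -
    have "(lam/4) * (K * pm) = C1 * P + lam * pm / 4" unfolding K_def using lam pm by (simp add: field_simps)
    thus ?thesis using lam pm by simp
  qed
  have hr: "rho * (C1 * P * ga + K * (2 * C3) * P * ga + (2 * C3) * P / pm) \<le> lam/4"
  proof -
    have "rho * W \<le> (lam / (4 * (W + 1))) * W" unfolding rho_def by (rule mult_right_mono) (use W0 in auto)
    also have "\<dots> \<le> lam / 4" using lam W0 by (simp add: field_simps)
    finally show ?thesis unfolding W_def .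
  qed
  have B: "\<forall>K' y1 y2 z. K' \<ge> 0 \<longrightarrow> Phi c E G lam pp ys K' y1 y2 z \<le> ga * (\<bar>y1\<bar> + \<bar>y2\<bar> + \<bar>z\<bar>)"
  proof (intro allI impI)
    fix K' y1 y2 z :: real assume K': "K' \<ge> 0"
    let ?N = "\<bar>y1\<bar> + \<bar>y2\<bar> + \<bar>z\<bar>"
    have "K' * ((lf (-c) (E + lam) (-G) y1 y2 z)^2 + pp * (lf 0 (-1) (-lam) y1 y2 z)^2) \<ge> 0"
      using K' pp by simp
    moreover have "lf 1 (lam*ys) (ys*(G - pp)) y1 y2 z \<le> ga * ?N"
      using lf_bound[of 1 "lam*ys" "ys*(G - pp)" y1 y2 z] lam ys unfolding ga_def by simp
    ultimately show "Phi c E G lam pp ys K' y1 y2 z \<le> ga * ?N" unfolding Phi_def by linarith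
  qed
  have A: "\<forall>y1 y2 z. \<bar>y1\<bar> + \<bar>y2\<bar> + \<bar>z\<bar> \<le> rho \<longrightarrow> Phi c E G lam pp ys K y1 y2 z > 0 \<longrightarrow>
        DPhi c E G lam pp ys K y1 y2 z (vel1 c ys KP KI y1 y2 z) (vel2 c E G KP KI y1 y2 z) (- y2)
          \<ge> (lam/2) * Phi c E G lam pp ys K y1 y2 z"
  proof (intro allI impI)
    fix y1 y2 z :: real
    assume Nr: "\<bar>y1\<bar> + \<bar>y2\<bar> + \<bar>z\<bar> \<le> rho" and pos: "Phi c E G lam pp ys K y1 y2 z > 0"
    define N where "N = \<bar>y1\<bar> + \<bar>y2\<bar> + \<bar>z\<bar>"
    define a where "a = lf 1 (lam*ys) (ys*(G - pp)) y1 y2 z"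
    define eta where "eta = lf (-c) (E + lam) (-G) y1 y2 z"
    define zeta where "zeta = lf 0 (-1) (-lam) y1 y2 z"
    define v where "v = lf 0 (-KP) KI y1 y2 z"
    define Q2 where "Q2 = v * lf (lam*ys) (-1) 0 y1 y2 z"
    define Q3 where "Q3 = v * (eta * lf (E + lam) c 0 y1 y2 z - pp * zeta * y1)"
    have N0: "N \<ge> 0" unfolding N_def by simp
    have vb: "\<bar>v\<bar> \<le> kv * N" unfolding v_def kv_def N_def using lf_bound[of 0 "-KP" KI y1 y2 z] KP KI by (simp add: add.commute)
    have Q2b: "\<bar>Q2\<bar> \<le> C1 * N^2"
    proof -
      have "\<bar>lf (lam*ys) (-1) 0 y1 y2 z\<bar> \<le> (lam * ys + 1) * N"
        unfolding N_def using lf_bound[of "lam*ys" "-1" 0 y1 y2 z] lam ys by simp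
      from prod_bound[OF vb this] show ?thesis unfolding Q2_def C1_def by (simp add: power2_eq_square algebra_simps)
    qed
    have Q3b: "\<bar>Q3\<bar> \<le> C3 * N^3"
    proof -
      have eb: "\<bar>eta\<bar> \<le> keta * N" unfolding eta_def keta_def N_def
        using lf_bound[of "-c" "E + lam" "-G" y1 y2 z] c E lam G by simp
      have wb: "\<bar>lf (E + lam) c 0 y1 y2 z\<bar> \<le> kw * N" unfolding kw_def N_def
        using lf_bound[of "E + lam" c 0 y1 y2 z] c E lam by simp
      have zb: "\<bar>zeta\<bar> \<le> kz * N" unfolding zeta_def kz_def N_def
        using lf_bound[of 0 "-1" "-lam" y1 y2 z] lam by simp
      have y1b: "\<bar>y1\<bar> \<le> N" unfolding N_def by simp
      have 1: "\<bar>eta * lf (E + lam) c 0 y1 y2 z\<bar> \<le> (keta * N) * (kw * N)" by (rule prod_bound[OF eb wb])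
      have 2: "\<bar>pp * zeta * y1\<bar> \<le> (pp * (kz * N)) * N"
        by (rule prod_bound[OF _ y1b]) (use zb pp in \<open>simp add: abs_mult mult_left_mono\<close>)
      have "\<bar>eta * lf (E + lam) c 0 y1 y2 z - pp * zeta * y1\<bar> \<le> (keta * N) * (kw * N) + (pp * (kz * N)) * N"
        by (rule order_trans[OF abs_triangle_ineq4 add_mono[OF 1 2]])
      from prod_bound[OF vb this] show ?thesis unfolding Q3_def C3_def by (simp add: power3_eq_cube algebra_simps)
    qed
    have ident: "DPhi c E G lam pp ys K y1 y2 z (vel1 c ys KP KI y1 y2 z) (vel2 c E G KP KI y1 y2 z) (- y2)
        = lam * a + Q2 + 2 * K * (E + lam) * eta^2 - 2 * K * Q3"
      unfolding DPhi_def vel1_def vel2_def Q2_def Q3_def a_def eta_def zeta_def v_def lf_def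
      using hc R1 R2 by algebra
    have Dl: "DPhi c E G lam pp ys K y1 y2 z (vel1 c ys KP KI y1 y2 z) (vel2 c E G KP KI y1 y2 z) (- y2)
        \<ge> lam * a - (C1 + K * (2 * C3) * N) * N^2"
    proof -
      have "2 * K * (E + lam) * eta^2 \<ge> 0" using K0 E lam by simp
      moreover have "Q2 \<ge> - (C1 * N^2)" using Q2b by linarith
      moreover have "2 * K * Q3 \<le> 2 * K * (C3 * N^3)" using Q3b K0 by (simp add: abs_le_iff)
      moreover have "(C1 + K * (2 * C3) * N) * N^2 = C1 * N^2 + 2 * K * (C3 * N^3)"
        by (simp add: power2_eq_square power3_eq_cube algebra_simps)
      ultimately show ?thesis unfolding ident by linarith
    qed
    have NP: "N^2 \<le> P * (a^2 + eta^2 + zeta^2)"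
    proof -
      have "N \<le> M * (\<bar>a\<bar> + \<bar>eta\<bar> + \<bar>zeta\<bar>)" unfolding N_def a_def eta_def zeta_def by (rule MB)
      hence "N^2 \<le> (M * (\<bar>a\<bar> + \<bar>eta\<bar> + \<bar>zeta\<bar>))^2" by (rule power_mono) (rule N0)
      also have "\<dots> = M^2 * (\<bar>a\<bar> + \<bar>eta\<bar> + \<bar>zeta\<bar>)^2" by (simp add: power_mult_distrib)
      also have "\<dots> \<le> M^2 * (3 * (\<bar>a\<bar>^2 + \<bar>eta\<bar>^2 + \<bar>zeta\<bar>^2))" by (rule mult_left_mono[OF sq3]) simp
      also have "\<dots> = P * (a^2 + eta^2 + zeta^2)" unfolding P_def by simp
      finally show ?thesis .
    qed
    have aN: "\<bar>a\<bar> \<le> ga * N"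
      using lf_bound[of 1 "lam*ys" "ys*(G - pp)" y1 y2 z] lam ys unfolding ga_def a_def N_def by simp
    have posa: "a - K * (eta^2 + pp * zeta^2) > 0" using pos unfolding Phi_def a_def eta_def zeta_def .
    have "DPhi c E G lam pp ys K y1 y2 z (vel1 c ys KP KI y1 y2 z) (vel2 c E G KP KI y1 y2 z) (- y2) \<ge> (lam/2) * a"
      by (rule core_ineq[OF lam K0 pm C10 _ P0 ga0 N0 _ rho1 NP aN posa Dl hK hr]) (use C30 Nr N_def in auto)
    moreover have "Phi c E G lam pp ys K y1 y2 z \<le> a"
      unfolding Phi_def a_def using K0 pp by simp
    ultimately show "DPhi c E G lam pp ys K y1 y2 z (vel1 c ys KP KI y1 y2 z) (vel2 c E G KP KI y1 y2 z) (- y2)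
          \<ge> (lam/2) * Phi c E G lam pp ys K y1 y2 z"
    proof -
      have "(lam/2) * Phi c E G lam pp ys K y1 y2 z \<le> (lam/2) * a"
        by (rule mult_left_mono) (use lam \<open>Phi c E G lam pp ys K y1 y2 z \<le> a\<close> in auto)
      thus ?thesis using \<open>DPhi c E G lam pp ys K y1 y2 z (vel1 c ys KP KI y1 y2 z) (vel2 c E G KP KI y1 y2 z) (- y2) \<ge> (lam/2) * a\<close> by linarith
    qed
  qed
  show ?thesis using A B K0 rho0 by blast
qed



lemma first_time:
  fixes g :: "real \<Rightarrow> real"
  assumes cont: "continuous_on {0..T} g" and g0: "g 0 < c" and t: "t \<in> {0..T}" and gt: "g t \<ge> c"
  shows "\<exists>t1\<in>{0..T}. g t1 = c \<and> (\<forall>s\<in>{0..<t1}. g s < c)"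
proof -
  define Z where "Z = {s \<in> {0..T}. c \<le> g s}"
  have Zc: "closed Z" unfolding Z_def
    by (rule continuous_on_closed_Collect_le[OF continuous_on_const cont closed_atLeastAtMost])
  have Zne: "Z \<noteq> {}" using t gt unfolding Z_def by auto
  have Zb: "bdd_below Z" unfolding Z_def by (rule bdd_belowI[of _ 0]) auto
  define t1 where "t1 = Inf Z"
  have t1Z: "t1 \<in> Z" unfolding t1_def by (rule closed_contains_Inf[OF Zne Zb Zc])
  hence t1T: "t1 \<in> {0..T}" and gt1: "c \<le> g t1" unfolding Z_def by auto
  have below: "g s < c" if "s \<in> {0..<t1}" for s
  proof (rule ccontr)
    assume "\<not> g s < c"
    hence "s \<in> Z" using that t1T unfolding Z_def by auto
    hence "t1 \<le> s" unfolding t1_def using Zb by (rule cInf_lower)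
    thus False using that by auto
  qed
  obtain s where s: "0 \<le> s" "s \<le> t1" "g s = c"
    using IVT'[of g 0 c t1] g0 gt1 t1T continuous_on_subset[OF cont, of "{0..t1}"] by auto
  have "s = t1"
  proof (rule ccontr)
    assume "s \<noteq> t1"
    hence "s \<in> {0..<t1}" using s by auto
    thus False using below s by auto
  qed
  thus ?thesis using s t1T below by auto
qed

lemma comp_deriv:
  fixes x :: "real \<Rightarrow> real^3"
  assumes "(x has_vector_derivative v) (at t within S)"
  shows "((\<lambda>t. x t $ i) has_real_derivative v $ i) (at t within S)"
  unfolding has_real_derivative_iff_has_vector_derivative
  by (rule bounded_linear.has_vector_derivative[OF bounded_linear_vec_nth assms])

lemma Phi_deriv:
  assumes d1: "(Y1 has_real_derivative e1) (at t within S)"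
    and d2: "(Y2 has_real_derivative e2) (at t within S)"
    and d3: "(Y3 has_real_derivative e3) (at t within S)"
  shows "((\<lambda>t. Phi c E G lam pp ys K (Y1 t) (Y2 t) (Y3 t)) has_real_derivative
      DPhi c E G lam pp ys K (Y1 t) (Y2 t) (Y3 t) e1 e2 e3) (at t within S)"
  unfolding Phi_def DPhi_def lf_def
  by (rule derivative_eq_intros d1 d2 d3 refl | simp add: power2_eq_square algebra_simps)+



lemma field_at:
  fixes x p :: "real^3" and d2 ys KP KI u0 c :: real
  assumes hc: "c * ys = 1" and p1: "p$1 = d2 * ys^2" and p2: "p$2 = ys" and p3: "KI * p$3 = c - u0"
  shows "boost_pi_field d2 ys KP KI u0 x $ 1 = vel1 c ys KP KI (x$1 - p$1) (x$2 - p$2) (x$3 - p$3)"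
    and "boost_pi_field d2 ys KP KI u0 x $ 2 = vel2 c (d2 + d2*ys^2*KP) (d2*ys^2*KI) KP KI (x$1 - p$1) (x$2 - p$2) (x$3 - p$3)"
    and "boost_pi_field d2 ys KP KI u0 x $ 3 = - (x$2 - p$2)"
proof -
  show "boost_pi_field d2 ys KP KI u0 x $ 1 = vel1 c ys KP KI (x$1 - p$1) (x$2 - p$2) (x$3 - p$3)"
    unfolding field_comp vel1_def lf_def p2 using hc p3 by algebra
  show "boost_pi_field d2 ys KP KI u0 x $ 2 = vel2 c (d2 + d2*ys^2*KP) (d2*ys^2*KI) KP KI (x$1 - p$1) (x$2 - p$2) (x$3 - p$3)"
    unfolding field_comp vel2_def lf_def p1 p2 using hc p3 by algebra
  show "boost_pi_field d2 ys KP KI u0 x $ 3 = - (x$2 - p$2)"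
    unfolding field_comp p2 by simp
qed


theorem proposition1:
  fixes d2 ystar KP KI u0 :: real
  assumes "d2 > 0" and "ystar > 0" and "KP \<ge> 0" and "KI > 0"
  shows "(\<exists>!p. equilibrium (boost_pi_field d2 ystar KP KI u0) p) \<and>
         (\<forall>p. equilibrium (boost_pi_field d2 ystar KP KI u0) p \<longrightarrow>
              \<not> lyapunov_stable (boost_pi_field d2 ystar KP KI u0) p)"
proof -
  note d2 = assms(1) and ys = assms(2) and KP = assms(3) and KI = assms(4)
  let ?f = "boost_pi_field d2 ystar KP KI u0"
  define c where "c = 1 / ystar"
  have hc: "c * ystar = 1" unfolding c_def using ys by simp
  have c0: "c > 0" unfolding c_def using ys by simp
  define p0 :: "real^3" where "p0 = vector [d2 * ystar^2, ystar, (c - u0) / KI]"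
  have p01: "p0$1 = d2 * ystar^2" unfolding p0_def by (simp only: vector_3)
  have p02: "p0$2 = ystar" unfolding p0_def by (simp only: vector_3)
  have p03': "p0$3 = (c - u0) / KI" unfolding p0_def by (simp only: vector_3)
  have p03: "KI * p0$3 = c - u0" unfolding p03' using KI by simp
  have eq_iff: "equilibrium ?f p \<longleftrightarrow> p = p0" for p
  proof
    assume "p = p0"
    have "?f p0 $ 1 = 0" "?f p0 $ 2 = 0" "?f p0 $ 3 = 0"
      using field_at[OF hc p01 p02 p03, where x=p0] by (simp_all add: vel1_def vel2_def lf_def)
    thus "equilibrium ?f p" unfolding equilibrium_def \<open>p = p0\<close> vec_eq_iff forall_3 by simp
  next
    assume "equilibrium ?f p"
    hence h: "?f p $ 1 = 0" "?f p $ 2 = 0" "?f p $ 3 = 0" unfolding equilibrium_def by simp_all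
    have q2: "p$2 = ystar" using h(3) unfolding field_comp by simp
    have h1: "1 - ystar * (u0 + KI * p$3) = 0" using h(1) unfolding field_comp q2 by (simp add: algebra_simps power2_eq_square)
    have u: "u0 + KI * p$3 = c" using h1 hc ys by (simp add: c_def field_simps)
    have q3: "p$3 = p0$3" unfolding p03' using u KI by (simp add: field_simps)
    have h2: "- d2 * ystar + p$1 * (u0 + KI * p$3) = 0" using h(2) unfolding field_comp q2 by (simp add: algebra_simps)
    have "p$1 * c = d2 * ystar" using h2 u by simp
    hence q1: "p$1 = p0$1" unfolding p01 c_def using ys by (simp add: field_simps power2_eq_square)
    show "p = p0"
      unfolding vec_eq_iff forall_3 using q1 q2 q3 p02 by simp
  qed
  have part1: "\<exists>!p. equilibrium ?f p" by (rule ex1I[of _ p0]) (simp_all add: eq_iff)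
  \<comment> \<open>the unstable eigenvalue\<close>
  define E where "E = d2 + d2 * ystar^2 * KP"
  define G where "G = d2 * ystar^2 * KI"
  have E0: "E \<ge> 0" unfolding E_def using d2 KP by simp
  have G0: "G \<ge> 0" unfolding G_def using d2 KI by simp
  define gp where "gp s = s^3 + E * s^2 + (G - KP + c^2) * s - KI" for s :: real
  define R where "R = 1 + KI + KP"
  have R1: "R \<ge> 1" unfolding R_def using KI KP by simp
  have gR: "gp R \<ge> 0"
  proof -
    have "R^3 \<ge> R^2" using R1 by (simp add: power_increasing)
    moreover have "R^2 = R + KI * R + KP * R" unfolding R_def by (simp add: power2_eq_square algebra_simps)
    moreover have "KI * R \<ge> KI" using R1 KI by simp
    moreover have "E * R^2 \<ge> 0" using E0 by simp
    moreover have "(G + c^2) * R \<ge> 0" using G0 R1 by simp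
    moreover have "gp R = R^3 + E * R^2 + (G + c^2) * R - KP * R - KI" unfolding gp_def by (simp add: algebra_simps)
    ultimately show ?thesis using R1 by linarith
  qed
  have g0: "gp 0 = - KI" unfolding gp_def by simp
  have gpc: "continuous_on {0..R} gp" unfolding gp_def by (intro continuous_intros)
  obtain lam where lam0: "0 \<le> lam" "lam \<le> R" and glam: "gp lam = 0"
    using IVT'[of gp 0 0 R, OF _ _ _ gpc] g0 gR R1 KI by auto
  have lam: "lam > 0" using lam0 glam g0 KI by (cases "lam = 0") auto
  define pp where "pp = KI / lam"
  have Rl1: "lam * pp = KI" unfolding pp_def using lam by simp
  have Rl2: "pp = lam^2 + E*lam + G - KP + c^2"
  proof -
    have "lam * (lam^2 + E*lam + G - KP + c^2) = KI" using glam unfolding gp_def by (simp add: algebra_simps power2_eq_square power3_eq_cube)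
    thus ?thesis unfolding pp_def using lam by (simp add: field_simps)
  qed
  obtain K rho ga where K: "K > 0" and rho: "rho > 0"
    and chetA: "\<forall>y1 y2 z. \<bar>y1\<bar> + \<bar>y2\<bar> + \<bar>z\<bar> \<le> rho \<longrightarrow> Phi c E G lam pp ystar K y1 y2 z > 0 \<longrightarrow>
        DPhi c E G lam pp ystar K y1 y2 z (vel1 c ystar KP KI y1 y2 z) (vel2 c E G KP KI y1 y2 z) (- y2)
          \<ge> (lam/2) * Phi c E G lam pp ystar K y1 y2 z"
    and gabA: "\<forall>K' y1 y2 z. K' \<ge> 0 \<longrightarrow> Phi c E G lam pp ystar K' y1 y2 z \<le> ga * (\<bar>y1\<bar> + \<bar>y2\<bar> + \<bar>z\<bar>)"
    using model_ineq[OF ys c0 hc E0 G0 KP KI lam Rl1 Rl2] by (elim exE conjE) blast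
  have chet: "DPhi c E G lam pp ystar K y1 y2 z (vel1 c ystar KP KI y1 y2 z) (vel2 c E G KP KI y1 y2 z) (- y2)
          \<ge> (lam/2) * Phi c E G lam pp ystar K y1 y2 z"
    if "\<bar>y1\<bar> + \<bar>y2\<bar> + \<bar>z\<bar> \<le> rho" "Phi c E G lam pp ystar K y1 y2 z > 0" for y1 y2 z
    using chetA that by blast
  have gab: "Phi c E G lam pp ystar K y1 y2 z \<le> ga * (\<bar>y1\<bar> + \<bar>y2\<bar> + \<bar>z\<bar>)" for y1 y2 z
    using gabA K by auto
  have part2: "\<not> lyapunov_stable ?f p0"
  proof
    assume stab: "lyapunov_stable ?f p0"
    define eps where "eps = rho / 3"
    have eps: "eps > 0" unfolding eps_def using rho by simp
    obtain \<delta> where \<delta>: "\<delta> > 0" and stabA: "\<forall>x T. 0 \<le> T \<and> ode_solution_on ?f T x \<and> dist (x 0) p0 < \<delta> \<longrightarrow>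
        (\<forall>t\<in>{0..T}. dist (x t) p0 < eps)"
      using stab eps unfolding lyapunov_stable_def by blast
    have stabd: "\<forall>t\<in>{0..T}. dist (x t) p0 < eps"
      if "0 \<le> T" "ode_solution_on ?f T x" "dist (x 0) p0 < \<delta>" for x T
      using stabA that by blast
    define sK where "sK = 1 / (2 * K * c^2)"
    have sK: "sK > 0" unfolding sK_def using K c0 by simp
    define s where "s = min (\<delta>/2) (min (eps/2) sK)"
    have s0: "s > 0" unfolding s_def using \<delta> eps sK by simp
    have sd: "s < \<delta>" unfolding s_def using \<delta> by simp
    have ssK: "s \<le> sK" unfolding s_def by simp
    define x0 :: "real^3" where "x0 = p0 + vector [s, 0, 0]"
    have x01: "x0$1 - p0$1 = s" unfolding x0_def by (simp only: vector_add_component vector_3; simp)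
    have x02: "x0$2 - p0$2 = 0" unfolding x0_def by (simp only: vector_add_component vector_3; simp)
    have x03: "x0$3 - p0$3 = 0" unfolding x0_def by (simp only: vector_add_component vector_3; simp)
    have dxs: "dist x0 p0 \<le> s"
    proof -
      have "dist x0 p0 \<le> \<bar>(x0 - p0)$1\<bar> + \<bar>(x0 - p0)$2\<bar> + \<bar>(x0 - p0)$3\<bar>" unfolding dist_norm by (rule norm3)
      also have "\<dots> = s" using x01 x02 x03 s0 by simp
      finally show ?thesis .
    qed
    have dx0: "dist x0 p0 < \<delta>" using dxs sd by simp
    have se: "s < eps" unfolding s_def using eps by simp
    define Phi0 where "Phi0 = Phi c E G lam pp ystar K s 0 0"
    have Phi0: "Phi0 > 0"
    proof -
      have e: "Phi0 = s * (1 - K * c^2 * s)" unfolding Phi0_def Phi_def lf_def by (simp add: power2_eq_square algebra_simps)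
      have "K * c^2 * s \<le> K * c^2 * sK" using ssK K by (intro mult_left_mono) simp_all
      also have "\<dots> = 1/2" unfolding sK_def using K c0 by simp
      finally show ?thesis unfolding e using s0 by simp
    qed
    obtain L B where L: "L > 0"
      and lip: "\<forall>x y. norm (?f (clampb p0 eps x) - ?f (clampb p0 eps y)) \<le> L * norm (x - y)"
      and bnd: "\<forall>x. norm (?f (clampb p0 eps x)) \<le> B"
      using mod_field[OF less_imp_le[OF KI] KP less_imp_le[OF ys] eps, of d2 u0 p0] by blast
    define F where "F x = ?f (clampb p0 eps x)" for x
    define T where "T = 4 * (\<bar>ga\<bar> * rho) / (lam * Phi0) + 1"
    have T0: "T \<ge> 0" unfolding T_def using lam Phi0 rho by simp
    obtain xs where xs0: "xs 0 = x0" and xsol: "ode_solution_on F T xs"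
      using global_exist[of F L B T x0] lip bnd L T0 unfolding F_def by blast
    have xder: "(xs has_vector_derivative F (xs t)) (at t within {0..T})" if "t \<in> {0..T}" for t
      using xsol that unfolding ode_solution_on_def by blast
    have xcont: "continuous_on {0..T} xs"
      unfolding continuous_on_eq_continuous_within using xder has_vector_derivative_continuous by blast
    have Fid: "F x = ?f x" if "dist x p0 \<le> eps" for x
      unfolding F_def using clampb_id[OF that] by simp
    have truesol: "ode_solution_on ?f t1 xs" if t1: "t1 \<in> {0..T}" and inb: "\<forall>t\<in>{0..t1}. dist (xs t) p0 \<le> eps" for t1
      unfolding ode_solution_on_def
    proof
      fix t assume t: "t \<in> {0..t1}"
      hence tT: "t \<in> {0..T}" using t1 by auto
      have "(xs has_vector_derivative F (xs t)) (at t within {0..t1})"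
        by (rule has_vector_derivative_within_subset[OF xder[OF tT]]) (use t1 in auto)
      thus "(xs has_vector_derivative ?f (xs t)) (at t within {0..t1})" using Fid inb t by simp
    qed
    define gd where "gd t = dist (xs t) p0" for t
    have gdc: "continuous_on {0..T} gd" unfolding gd_def by (intro continuous_intros xcont)
    show False
    proof (cases "\<exists>t\<in>{0..T}. gd t \<ge> eps")
      case True
      then obtain t where t: "t \<in> {0..T}" "gd t \<ge> eps" by blast
      have "gd 0 < eps" unfolding gd_def xs0 using dxs se by simp
      from first_time[OF gdc this t(1) t(2)] obtain t1 where t1: "t1 \<in> {0..T}" "gd t1 = eps"
        and bel: "\<forall>s\<in>{0..<t1}. gd s < eps" by blast
      have inb: "\<forall>t\<in>{0..t1}. dist (xs t) p0 \<le> eps"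
      proof
        fix t assume "t \<in> {0..t1}"
        hence "t \<in> {0..<t1} \<or> t = t1" by auto
        thus "dist (xs t) p0 \<le> eps"
        proof
          assume "t \<in> {0..<t1}"
          hence "gd t < eps" using bel by blast
          thus ?thesis unfolding gd_def by simp
        next
          assume "t = t1"
          thus ?thesis using t1 unfolding gd_def by simp
        qed
      qed
      have sol: "ode_solution_on ?f t1 xs" by (rule truesol[OF t1(1) inb])
      have "\<forall>t\<in>{0..t1}. dist (xs t) p0 < eps"
        by (rule stabd) (use t1 sol xs0 dx0 in auto)
      hence "gd t1 < eps" unfolding gd_def using t1 by auto
      thus False using t1 by simp
    next
      case False
      hence inb: "\<forall>t\<in>{0..T}. dist (xs t) p0 < eps" unfolding gd_def by (auto simp: not_le)
      define y1 where "y1 t = xs t $ 1 - p0 $ 1" for t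
      define y2 where "y2 t = xs t $ 2 - p0 $ 2" for t
      define y3 where "y3 t = xs t $ 3 - p0 $ 3" for t
      have Nb: "\<bar>y1 t\<bar> + \<bar>y2 t\<bar> + \<bar>y3 t\<bar> \<le> rho" if t: "t \<in> {0..T}" for t
      proof -
        have "\<bar>y1 t\<bar> \<le> dist (xs t) p0" unfolding y1_def dist_norm using component_le_norm_cart[of "xs t - p0" 1] by simp
        moreover have "\<bar>y2 t\<bar> \<le> dist (xs t) p0" unfolding y2_def dist_norm using component_le_norm_cart[of "xs t - p0" 2] by simp
        moreover have "\<bar>y3 t\<bar> \<le> dist (xs t) p0" unfolding y3_def dist_norm using component_le_norm_cart[of "xs t - p0" 3] by simp
        moreover have "dist (xs t) p0 < eps" using inb t by blast
        ultimately show ?thesis unfolding eps_def by linarith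
      qed
      define \<phi> where "\<phi> t = Phi c E G lam pp ystar K (y1 t) (y2 t) (y3 t)" for t
      define D where "D t = DPhi c E G lam pp ystar K (y1 t) (y2 t) (y3 t)
          (vel1 c ystar KP KI (y1 t) (y2 t) (y3 t)) (vel2 c E G KP KI (y1 t) (y2 t) (y3 t)) (- y2 t)" for t
      have phider: "(\<phi> has_real_derivative D t) (at t within {0..T})" if t: "t \<in> {0..T}" for t
      proof -
        have fx: "F (xs t) = ?f (xs t)" using Fid inb t by (simp add: less_imp_le)
        have xd: "(xs has_vector_derivative ?f (xs t)) (at t within {0..T})" using xder[OF t] fx by simp
        have cd: "((\<lambda>t. xs t $ i - p0 $ i) has_real_derivative ?f (xs t) $ i) (at t within {0..T})" for i
          using DERIV_diff[OF comp_deriv[OF xd, of i] DERIV_const[of "p0 $ i"]] by simp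
        note fa = field_at[OF hc p01 p02 p03, where x="xs t"]
        have d1: "(y1 has_real_derivative vel1 c ystar KP KI (y1 t) (y2 t) (y3 t)) (at t within {0..T})"
          using cd[of 1] unfolding fa y1_def y2_def y3_def .
        have d2: "(y2 has_real_derivative vel2 c E G KP KI (y1 t) (y2 t) (y3 t)) (at t within {0..T})"
          using cd[of 2] unfolding fa y1_def y2_def y3_def E_def G_def .
        have d3: "(y3 has_real_derivative - y2 t) (at t within {0..T})"
          using cd[of 3] unfolding fa y2_def y3_def .
        show ?thesis unfolding \<phi>_def D_def using Phi_deriv[OF d1 d2 d3] by simp
      qed
      have Dge: "D t \<ge> (lam/2) * \<phi> t" if "t \<in> {0..T}" "\<phi> t > 0" for t
        unfolding D_def \<phi>_def by (rule chet) (use Nb that \<phi>_def in auto)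
      have phi0: "\<phi> 0 = Phi0" unfolding \<phi>_def Phi0_def y1_def y2_def y3_def xs0 x01 x02 x03 ..
      define \<psi> where "\<psi> t = \<phi> t - Phi0/2 - (lam * Phi0 / 4) * t" for t
      have psider: "(\<psi> has_real_derivative D t - lam * Phi0 / 4) (at t within {0..T})" if "t \<in> {0..T}" for t
        unfolding \<psi>_def using phider[OF that]
        by (auto intro!: derivative_eq_intros)
      have psicont: "continuous_on {0..T} \<psi>"
        unfolding continuous_on_eq_continuous_within using psider DERIV_continuous by blast
      have psiT: "\<psi> T > 0"
      proof (rule ccontr)
        assume "\<not> \<psi> T > 0"
        hence gT: "(\<lambda>t. - \<psi> t) T \<ge> 0" by simp
        have g0: "(\<lambda>t. - \<psi> t) 0 < 0" unfolding \<psi>_def phi0 using Phi0 by simp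
        have mc: "continuous_on {0..T} (\<lambda>t. - \<psi> t)" by (intro continuous_intros psicont)
        obtain t1 where t1: "t1 \<in> {0..T}" "- \<psi> t1 = 0" and bel: "\<forall>s\<in>{0..<t1}. - \<psi> s < 0"
          using first_time[OF mc g0 _ gT] T0 by auto
        have "\<psi> 0 \<le> \<psi> t1"
        proof (rule DERIV_nonneg_imp_increasing_open[of 0 t1 \<psi>])
          show "0 \<le> t1" using t1 by simp
          show "continuous_on {0..t1} \<psi>" by (rule continuous_on_subset[OF psicont]) (use t1 in auto)
          fix x assume x: "0 < x" "x < t1"
          hence xT: "x \<in> {0..T}" using t1 by auto
          have "\<psi> x > 0" using bel x by auto
          hence phx: "\<phi> x > Phi0 / 2" unfolding \<psi>_def using lam Phi0 x by (smt (verit) mult_pos_pos divide_pos_pos)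
          hence "D x \<ge> (lam/2) * \<phi> x" using Dge[OF xT] Phi0 by simp
          moreover have "(lam/2) * \<phi> x \<ge> (lam/2) * (Phi0/2)" using phx lam by (intro mult_left_mono) auto
          moreover have "(lam/2) * (Phi0/2) = lam * Phi0 / 4" by simp
          ultimately have Dx: "D x - lam * Phi0 / 4 \<ge> 0" by linarith
          have "at x within {0..T} = at x" using x t1 by (intro at_within_Icc_at) auto
          hence "DERIV \<psi> x :> D x - lam * Phi0 / 4" using psider[OF xT] by simp
          thus "\<exists>y. DERIV \<psi> x :> y \<and> 0 \<le> y" using Dx by blast
        qed
        moreover have "\<psi> 0 = Phi0 / 2" unfolding \<psi>_def phi0 by simp
        ultimately show False using t1 Phi0 by simp
      qed
      have "\<phi> T > lam * Phi0 / 4 * T" using psiT Phi0 unfolding \<psi>_def by simp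
      moreover have "lam * Phi0 / 4 * T = \<bar>ga\<bar> * rho + lam * Phi0 / 4"
        unfolding T_def using lam Phi0 by (simp add: field_simps)
      moreover have "\<phi> T \<le> \<bar>ga\<bar> * rho"
      proof -
        have TT: "T \<in> {0..T}" using T0 by simp
        have "\<phi> T \<le> ga * (\<bar>y1 T\<bar> + \<bar>y2 T\<bar> + \<bar>y3 T\<bar>)" unfolding \<phi>_def by (rule gab)
        also have "\<dots> \<le> \<bar>ga\<bar> * (\<bar>y1 T\<bar> + \<bar>y2 T\<bar> + \<bar>y3 T\<bar>)" by (rule mult_right_mono) auto
        also have "\<dots> \<le> \<bar>ga\<bar> * rho" by (rule mult_left_mono[OF Nb[OF TT]]) simp
        finally show ?thesis .
      qed
      ultimately show False using lam Phi0 by (smt (verit) mult_pos_pos divide_pos_pos)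
    qed
  qed
  show ?thesis using part1 part2 eq_iff by blast
qed


end
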